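(* For every integer $n>1$, \[ \mathrm{DE3}(n+2)+\mathrm{DE3}(n-1) = \mathrm{DE1}(n)+\mathrm{DE1}(n-1). \]
   Context: For a nonnegative integer $n$, $\mathrm{DE1}(n)$ denotes the number of partitions of $n$ in which no even part is repeated and the largest part is odd, and $\mathrm{DE3}(n)$ denotes the number of partitions of $n$ in which no even part is repeated and the largest part is odd and appears exactly once. In both cases the empty partition is not counted, so $\mathrm{DE1}(0)=\mathrm{DE3}(0)=0$. *)

theory Defs
  imports Main "HOL-Library.Multiset"
begin

definition partitions_of :: "nat \<Rightarrow> nat multiset set" where
  "partitions_of n = {P. (\<forall>x\<in>#P. x > 0) \<and> sum_mset P = n}"

definition no_even_repeated :: "nat multiset \<Rightarrow> bool" where
  "no_even_repeated P \<longleftrightarrow> (\<forall>x. even x \<longrightarrow> count P x \<le> 1)"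

definition DE1 :: "nat \<Rightarrow> nat" where
  "DE1 n = card {P \<in> partitions_of n. P \<noteq> {#} \<and> no_even_repeated P \<and> odd (Max_mset P)}"

definition DE3 :: "nat \<Rightarrow> nat" where
  "DE3 n = card {P \<in> partitions_of n. P \<noteq> {#} \<and> no_even_repeated P \<and> odd (Max_mset P)
                    \<and> count P (Max_mset P) = 1}"

end

theory Submission
  imports Defs
begin

lemma Max_add: "(\<forall>x\<in>#R. x \<le> (c::nat)) \<Longrightarrow> Max_mset (add_mset c R) = c"
  by (rule Max_eqI) auto

lemma ner_odd: "odd c \<Longrightarrow> no_even_repeated (add_mset c R) \<longleftrightarrow> no_even_repeated R"
  unfolding no_even_repeated_def by auto

lemma ner_even: "even c \<Longrightarrow> no_even_repeated (add_mset c R) \<longleftrightarrow> no_even_repeated R \<and> c \<notin># R"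
  unfolding no_even_repeated_def
proof safe
  fix x :: nat assume "even c" "\<forall>x. even x \<longrightarrow> count (add_mset c R) x \<le> 1" "even x"
  hence "count (add_mset c R) x \<le> 1" by blast
  thus "count R x \<le> 1" by (simp split: if_splits)
next
  assume "even c" "\<forall>x. even x \<longrightarrow> count (add_mset c R) x \<le> 1" "c \<in># R"
  hence "count (add_mset c R) c \<le> 1" by blast
  hence "count R c = 0" by simp
  thus False using \<open>c \<in># R\<close> by (simp add: count_eq_zero_iff)
next
  fix x :: nat assume "even c" "\<forall>x. even x \<longrightarrow> count R x \<le> 1" "c \<notin># R" "even x"
  thus "count (add_mset c R) x \<le> 1" by (cases "x = c") (auto simp: count_eq_zero_iff[symmetric])
qed

lemma parts_add: "add_mset c R \<in> partitions_of n \<longleftrightarrow> c > 0 \<and> c \<le> n \<and> R \<in> partitions_of (n - c)"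
  unfolding partitions_of_def by auto

definition S1 :: "nat \<Rightarrow> nat multiset set" where
  "S1 k = {P \<in> partitions_of k. P \<noteq> {#} \<and> no_even_repeated P \<and> odd (Max_mset P)}"

lemma charS1: "P \<in> S1 k \<longleftrightarrow> (\<exists>m R. P = add_mset m R \<and> odd m \<and> 0 < m \<and> m \<le> k \<and>
   (\<forall>x\<in>#R. x \<le> m) \<and> R \<in> partitions_of (k - m) \<and> no_even_repeated R)"
proof
  assume P: "P \<in> S1 k"
  define m where "m = Max_mset P"
  define R where "R = P - {#m#}"
  have ne: "P \<noteq> {#}" using P by (simp add: S1_def)
  have "m \<in># P" using ne unfolding m_def by simp
  hence PR: "P = add_mset m R" unfolding R_def by simp
  have le: "\<forall>x\<in>#R. x \<le> m" unfolding m_def R_def using in_diffD by fastforce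
  have om: "odd m" using P by (simp add: S1_def m_def)
  have "P \<in> partitions_of k" "no_even_repeated P" using P by (auto simp: S1_def)
  thus "\<exists>m R. P = add_mset m R \<and> odd m \<and> 0 < m \<and> m \<le> k \<and>
   (\<forall>x\<in>#R. x \<le> m) \<and> R \<in> partitions_of (k - m) \<and> no_even_repeated R"
    using PR le om parts_add[of m R k] ner_odd[OF om, of R] by metis
next
  assume "\<exists>m R. P = add_mset m R \<and> odd m \<and> 0 < m \<and> m \<le> k \<and>
   (\<forall>x\<in>#R. x \<le> m) \<and> R \<in> partitions_of (k - m) \<and> no_even_repeated R"
  then obtain m R where h: "P = add_mset m R" "odd m" "0 < m" "m \<le> k"
   "\<forall>x\<in>#R. x \<le> m" "R \<in> partitions_of (k - m)" "no_even_repeated R" by blast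
  show "P \<in> S1 k" unfolding S1_def using h Max_add[OF h(5)] parts_add[of m R k] ner_odd[OF h(2), of R]
    by simp
qed

lemma charA: "(Q \<in> S1 (n+2) \<and> count Q (Max_mset Q) = 1 \<and> Max_mset Q - 1 \<notin># Q) \<longleftrightarrow>
  (\<exists>m R. Q = add_mset (m+2) R \<and> odd m \<and> 0 < m \<and> m \<le> n \<and>
   (\<forall>x\<in>#R. x \<le> m) \<and> R \<in> partitions_of (n - m) \<and> no_even_repeated R)"
proof
  assume a: "Q \<in> S1 (n+2) \<and> count Q (Max_mset Q) = 1 \<and> Max_mset Q - 1 \<notin># Q"
  hence "Q \<in> S1 (n+2)" by simp
  then obtain M R where h: "Q = add_mset M R" "odd M" "0 < M" "M \<le> n+2"
   "\<forall>x\<in>#R. x \<le> M" "R \<in> partitions_of (n+2 - M)" "no_even_repeated R"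
    unfolding charS1 by blast
  have MQ: "Max_mset Q = M" using h Max_add by simp
  have "count R M = 0" using a MQ h(1) by simp
  hence nM: "M \<notin># R" by (simp add: count_eq_zero_iff)
  have nM1: "M - 1 \<notin># R" using a MQ h(1) by simp
  have le: "\<forall>x\<in>#R. x \<le> M - 2"
  proof
    fix x assume "x \<in># R"
    hence "x \<le> M" "x \<noteq> M" "x \<noteq> M - 1" using h(5) nM nM1 by auto
    thus "x \<le> M - 2" by linarith
  qed
  have "M \<noteq> 1"
  proof
    assume "M = 1"
    hence "\<forall>x\<in>#R. x = 0" using le by simp
    moreover have "\<forall>x\<in>#R. x > 0" using h(6) by (simp add: partitions_of_def)
    ultimately have "R = {#}" by (cases R) auto
    thus False using h(6) \<open>M = 1\<close> by (simp add: partitions_of_def)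
  qed
  moreover have "M \<noteq> 2" using h(2) by auto
  ultimately have M3: "M \<ge> 3" using h(3) by linarith
  show "\<exists>m R. Q = add_mset (m+2) R \<and> odd m \<and> 0 < m \<and> m \<le> n \<and>
   (\<forall>x\<in>#R. x \<le> m) \<and> R \<in> partitions_of (n - m) \<and> no_even_repeated R"
  proof (rule exI[of _ "M-2"], rule exI[of _ R], intro conjI)
    have "M - 2 + 2 = M" using M3 by auto
    thus "Q = add_mset (M - 2 + 2) R" using h(1) by simp
    show "odd (M - 2)" using h(2) M3 by simp
    show "0 < M - 2" using M3 by simp
    show "M - 2 \<le> n" using h(4) by simp
    have eq: "n + 2 - M = n - (M - 2)" using M3 by simp
    show "R \<in> partitions_of (n - (M - 2))" using h(6) unfolding eq .
  qed (use le h in auto)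
next
  assume "\<exists>m R. Q = add_mset (m+2) R \<and> odd m \<and> 0 < m \<and> m \<le> n \<and>
   (\<forall>x\<in>#R. x \<le> m) \<and> R \<in> partitions_of (n - m) \<and> no_even_repeated R"
  then obtain m R where h: "Q = add_mset (m+2) R" "odd m" "0 < m" "m \<le> n"
   "\<forall>x\<in>#R. x \<le> m" "R \<in> partitions_of (n - m)" "no_even_repeated R" by blast
  have le: "\<forall>x\<in>#R. x \<le> m+2" using h(5) by auto
  have MQ: "Max_mset Q = m+2" using h(1) Max_add[OF le] by simp
  have "Q \<in> S1 (n+2)" unfolding charS1
    apply (rule exI[of _ "m+2"], rule exI[of _ R]) using h le by simp
  moreover have "m + 2 \<notin># R" "m + 1 \<notin># R" using h(5) by auto
  ultimately show "Q \<in> S1 (n+2) \<and> count Q (Max_mset Q) = 1 \<and> Max_mset Q - 1 \<notin># Q"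
    using MQ h(1) by (simp add: count_eq_zero_iff)
qed


lemma charC: "(P \<in> S1 k \<and> count P (Max_mset P) \<noteq> 1) \<longleftrightarrow>
  (\<exists>m R. P = add_mset m (add_mset m R) \<and> odd m \<and> 0 < m \<and> m + m \<le> k \<and>
   (\<forall>x\<in>#R. x \<le> m) \<and> R \<in> partitions_of (k - m - m) \<and> no_even_repeated R)"
proof
  assume a: "P \<in> S1 k \<and> count P (Max_mset P) \<noteq> 1"
  hence "P \<in> S1 k" by simp
  then obtain m R' where h: "P = add_mset m R'" "odd m" "0 < m" "m \<le> k"
   "\<forall>x\<in>#R'. x \<le> m" "R' \<in> partitions_of (k - m)" "no_even_repeated R'"
    unfolding charS1 by blast
  have MP: "Max_mset P = m" using h Max_add by simp
  have "count R' m \<noteq> 0" using a MP h(1) by simp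
  hence "m \<in># R'" by (simp add: count_eq_zero_iff)
  then obtain R where R': "R' = add_mset m R" by (metis multi_member_split)
  show "\<exists>m R. P = add_mset m (add_mset m R) \<and> odd m \<and> 0 < m \<and> m + m \<le> k \<and>
   (\<forall>x\<in>#R. x \<le> m) \<and> R \<in> partitions_of (k - m - m) \<and> no_even_repeated R"
    apply (rule exI[of _ m], rule exI[of _ R])
    using h R' parts_add[of m R "k - m"] ner_odd[OF h(2), of R] by auto
next
  assume "\<exists>m R. P = add_mset m (add_mset m R) \<and> odd m \<and> 0 < m \<and> m + m \<le> k \<and>
   (\<forall>x\<in>#R. x \<le> m) \<and> R \<in> partitions_of (k - m - m) \<and> no_even_repeated R"
  then obtain m R where h: "P = add_mset m (add_mset m R)" "odd m" "0 < m" "m + m \<le> k"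
   "\<forall>x\<in>#R. x \<le> m" "R \<in> partitions_of (k - m - m)" "no_even_repeated R" by blast
  have le: "\<forall>x\<in>#add_mset m R. x \<le> m" using h(5) by auto
  have MP: "Max_mset P = m" using h(1) Max_add[OF le] by simp
  have "P \<in> S1 k" unfolding charS1
    apply (rule exI[of _ m], rule exI[of _ "add_mset m R"])
    using h le parts_add[of m R "k - m"] ner_odd[OF h(2), of R] by auto
  thus "P \<in> S1 k \<and> count P (Max_mset P) \<noteq> 1" using MP h(1) by simp
qed

lemma charB: "(Q \<in> S1 (n+2) \<and> count Q (Max_mset Q) = 1 \<and> Max_mset Q - 1 \<in># Q) \<longleftrightarrow>
  (\<exists>m R. Q = add_mset (m+2) (add_mset (m+1) R) \<and> odd m \<and> 0 < m \<and> m + m \<le> n - 1 \<and>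
   (\<forall>x\<in>#R. x \<le> m) \<and> R \<in> partitions_of (n - 1 - m - m) \<and> no_even_repeated R)"
proof
  assume a: "Q \<in> S1 (n+2) \<and> count Q (Max_mset Q) = 1 \<and> Max_mset Q - 1 \<in># Q"
  hence "Q \<in> S1 (n+2)" by simp
  then obtain M R' where h: "Q = add_mset M R'" "odd M" "0 < M" "M \<le> n+2"
   "\<forall>x\<in>#R'. x \<le> M" "R' \<in> partitions_of (n+2 - M)" "no_even_repeated R'"
    unfolding charS1 by blast
  have MQ: "Max_mset Q = M" using h Max_add by simp
  have "count R' M = 0" using a MQ h(1) by simp
  hence nM: "M \<notin># R'" by (simp add: count_eq_zero_iff)
  have M1: "M - 1 \<in># R'" using a MQ h(1) h(3) by (cases M) auto
  then obtain R where R': "R' = add_mset (M - 1) R" by (metis multi_member_split)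
  have "M - 1 > 0" using M1 h(6) by (auto simp: partitions_of_def)
  moreover have "M \<noteq> 2" using h(2) by auto
  ultimately have M3: "M \<ge> 3" by linarith
  have ev: "even (M - 1)" using h(2) M3 by simp
  have nerR: "no_even_repeated R" "M - 1 \<notin># R" using h(7) R' ner_even[OF ev] by auto
  have le: "\<forall>x\<in>#R. x \<le> M - 2"
  proof
    fix x assume "x \<in># R"
    hence "x \<le> M" "x \<noteq> M" "x \<noteq> M - 1" using h(5) nM nerR(2) R' by auto
    thus "x \<le> M - 2" by linarith
  qed
  have pR: "R \<in> partitions_of (n + 2 - M - (M - 1))" "M - 1 \<le> n + 2 - M"
    using h(6) R' parts_add[of "M-1" R "n+2-M"] by auto
  show "\<exists>m R. Q = add_mset (m+2) (add_mset (m+1) R) \<and> odd m \<and> 0 < m \<and> m + m \<le> n - 1 \<and>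
   (\<forall>x\<in>#R. x \<le> m) \<and> R \<in> partitions_of (n - 1 - m - m) \<and> no_even_repeated R"
  proof (rule exI[of _ "M-2"], rule exI[of _ R], intro conjI)
    have "M - 2 + 2 = M" "M - 2 + 1 = M - 1" using M3 by auto
    thus "Q = add_mset (M - 2 + 2) (add_mset (M - 2 + 1) R)" using h(1) R' by simp
    show "odd (M - 2)" using h(2) M3 by simp
    show "0 < M - 2" using M3 by simp
    show "M - 2 + (M - 2) \<le> n - 1" using pR(2) M3 by simp
    show "R \<in> partitions_of (n - 1 - (M - 2) - (M - 2))"
    proof -
      have eq: "n + 2 - M - (M - 1) = n - 1 - (M - 2) - (M - 2)" using M3 by simp
      show ?thesis using pR(1) unfolding eq .
    qed
  qed (use le nerR in auto)
next
  assume "\<exists>m R. Q = add_mset (m+2) (add_mset (m+1) R) \<and> odd m \<and> 0 < m \<and> m + m \<le> n - 1 \<and>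
   (\<forall>x\<in>#R. x \<le> m) \<and> R \<in> partitions_of (n - 1 - m - m) \<and> no_even_repeated R"
  then obtain m R where h: "Q = add_mset (m+2) (add_mset (m+1) R)" "odd m" "0 < m" "m + m \<le> n - 1"
   "\<forall>x\<in>#R. x \<le> m" "R \<in> partitions_of (n - 1 - m - m)" "no_even_repeated R" by blast
  have le: "\<forall>x\<in>#add_mset (m+1) R. x \<le> m+2" using h(5) by auto
  have MQ: "Max_mset Q = m+2" using h(1) Max_add[OF le] by simp
  have n1: "m + 1 \<notin># R" "m + 2 \<notin># R" using h(5) by auto
  have ev: "even (m + 1)" using h(2) by simp
  have "Q \<in> S1 (n+2)" unfolding charS1
  proof (rule exI[of _ "m+2"], rule exI[of _ "add_mset (m+1) R"], intro conjI)
    show "add_mset (m + 1) R \<in> partitions_of (n + 2 - (m + 2))"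
      unfolding parts_add using h(3) h(4) h(6) by (simp add: numeral_eq_Suc)
    show "no_even_repeated (add_mset (m + 1) R)" using ner_even[OF ev] n1 h(7) by simp
  qed (use h le in auto)
  thus "Q \<in> S1 (n+2) \<and> count Q (Max_mset Q) = 1 \<and> Max_mset Q - 1 \<in># Q"
    using MQ h(1) n1 by (simp add: count_eq_zero_iff)
qed


lemma size_le_sum: "(\<forall>x\<in>#P. x > 0) \<Longrightarrow> size P \<le> sum_mset (P::nat multiset)"
  by (induction P) auto

lemma elem_le_sum: "x \<in># P \<Longrightarrow> x \<le> sum_mset (P::nat multiset)"
  by (induction P) auto

lemma finite_partitions: "finite (partitions_of n)"
proof -
  have "partitions_of n \<subseteq> (\<Union>k\<in>{0..n}. multisets_of_size {0..n} k)"
  proof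
    fix P assume "P \<in> partitions_of n"
    hence h: "\<forall>x\<in>#P. x > 0" "sum_mset P = n" by (auto simp: partitions_of_def)
    have "size P \<le> n" using size_le_sum[OF h(1)] h(2) by simp
    moreover have "set_mset P \<subseteq> {0..n}" using elem_le_sum h(2) by auto
    ultimately show "P \<in> (\<Union>k\<in>{0..n}. multisets_of_size {0..n} k)"
      by (auto simp: multisets_of_size_def)
  qed
  thus ?thesis by (rule finite_subset) auto
qed

lemma finite_S1: "finite (S1 k)"
  by (rule finite_subset[OF _ finite_partitions[of k]]) (auto simp: S1_def)

lemma DE1_S1: "DE1 k = card (S1 k)"
  unfolding DE1_def S1_def ..

lemma DE3_S1: "DE3 k = card {P \<in> S1 k. count P (Max_mset P) = 1}"
  unfolding DE3_def S1_def by (rule arg_cong[where f = card]) auto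

theorem corollary4:
  fixes n :: nat
  assumes "n > 1"
  shows "DE3 (n + 2) + DE3 (n - 1) = DE1 n + DE1 (n - 1)"
proof -
  define A where "A = {Q \<in> S1 (n+2). count Q (Max_mset Q) = 1 \<and> Max_mset Q - 1 \<notin># Q}"
  define B where "B = {Q \<in> S1 (n+2). count Q (Max_mset Q) = 1 \<and> Max_mset Q - 1 \<in># Q}"
  define C where "C = {P \<in> S1 (n-1). count P (Max_mset P) \<noteq> 1}"
  define T where "T = {(m, R). odd m \<and> 0 < m \<and> m \<le> n \<and>
   (\<forall>x\<in>#R. x \<le> m) \<and> R \<in> partitions_of (n - m) \<and> no_even_repeated R}"
  define U where "U = {(m, R). odd m \<and> 0 < m \<and> m + m \<le> n - 1 \<and>
   (\<forall>x\<in>#R. x \<le> m) \<and> R \<in> partitions_of (n - 1 - m - m) \<and> no_even_repeated R}"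
  have A_eq: "A = (\<lambda>(m, R). add_mset (m+2) R) ` T"
  proof (rule set_eqI)
    fix Q show "Q \<in> A \<longleftrightarrow> Q \<in> (\<lambda>(m, R). add_mset (m+2) R) ` T"
      unfolding A_def T_def using charA[of Q n] by (auto simp: image_iff)
  qed
  have S1_eq: "S1 n = (\<lambda>(m, R). add_mset m R) ` T"
  proof (rule set_eqI)
    fix Q show "Q \<in> S1 n \<longleftrightarrow> Q \<in> (\<lambda>(m, R). add_mset m R) ` T"
      unfolding T_def using charS1[of Q n] by (auto simp: image_iff)
  qed
  have B_eq: "B = (\<lambda>(m, R). add_mset (m+2) (add_mset (m+1) R)) ` U"
  proof (rule set_eqI)
    fix Q show "Q \<in> B \<longleftrightarrow> Q \<in> (\<lambda>(m, R). add_mset (m+2) (add_mset (m+1) R)) ` U"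
      unfolding B_def U_def using charB[of Q n] by (auto simp: image_iff)
  qed
  have C_eq: "C = (\<lambda>(m, R). add_mset m (add_mset m R)) ` U"
  proof (rule set_eqI)
    fix Q show "Q \<in> C \<longleftrightarrow> Q \<in> (\<lambda>(m, R). add_mset m (add_mset m R)) ` U"
      unfolding C_def U_def using charC[of Q "n-1"] by (auto simp: image_iff)
  qed
  have inj1: "inj_on (\<lambda>(m, R). add_mset (m+2) R) T"
  proof (rule inj_onI, clarify)
    fix m R m' R' assume "(m, R) \<in> T" "(m', R') \<in> T" and e: "add_mset (m+2) R = add_mset (m'+2) R'"
    hence "\<forall>x\<in>#R. x \<le> m+2" "\<forall>x\<in>#R'. x \<le> m'+2" unfolding T_def by auto
    hence "m + 2 = m' + 2" using e Max_add by metis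
    thus "m = m' \<and> R = R'" using e by simp
  qed
  have inj2: "inj_on (\<lambda>(m, R). add_mset m R) T"
  proof (rule inj_onI, clarify)
    fix m R m' R' assume "(m, R) \<in> T" "(m', R') \<in> T" and e: "add_mset m R = add_mset m' R'"
    hence "\<forall>x\<in>#R. x \<le> m" "\<forall>x\<in>#R'. x \<le> m'" unfolding T_def by auto
    hence "m = m'" using e Max_add by metis
    thus "m = m' \<and> R = R'" using e by simp
  qed
  have inj3: "inj_on (\<lambda>(m, R). add_mset (m+2) (add_mset (m+1) R)) U"
  proof (rule inj_onI, clarify)
    fix m R m' R' assume "(m, R) \<in> U" "(m', R') \<in> U"
      and e: "add_mset (m+2) (add_mset (m+1) R) = add_mset (m'+2) (add_mset (m'+1) R')"
    hence "\<forall>x\<in>#add_mset (m+1) R. x \<le> m+2" "\<forall>x\<in>#add_mset (m'+1) R'. x \<le> m'+2"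
      unfolding U_def by auto
    hence "m + 2 = m' + 2" using e Max_add by metis
    thus "m = m' \<and> R = R'" using e by simp
  qed
  have inj4: "inj_on (\<lambda>(m, R). add_mset m (add_mset m R)) U"
  proof (rule inj_onI, clarify)
    fix m R m' R' assume "(m, R) \<in> U" "(m', R') \<in> U"
      and e: "add_mset m (add_mset m R) = add_mset m' (add_mset m' R')"
    hence "\<forall>x\<in>#add_mset m R. x \<le> m" "\<forall>x\<in>#add_mset m' R'. x \<le> m'"
      unfolding U_def by auto
    hence "m = m'" using e Max_add by metis
    thus "m = m' \<and> R = R'" using e by simp
  qed
  have cA: "card A = DE1 n"
    unfolding DE1_S1 A_eq S1_eq card_image[OF inj1] card_image[OF inj2] ..
  have cB: "card B = card C"
    unfolding B_eq C_eq card_image[OF inj3] card_image[OF inj4] ..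
  have "{P \<in> S1 (n+2). count P (Max_mset P) = 1} = A \<union> B" unfolding A_def B_def by auto
  moreover have "finite A" "finite B" unfolding A_def B_def using finite_S1 by auto
  moreover have "A \<inter> B = {}" unfolding A_def B_def by auto
  ultimately have d3: "DE3 (n+2) = card A + card B" unfolding DE3_S1 by (simp add: card_Un_disjoint)
  have "S1 (n-1) = {P \<in> S1 (n-1). count P (Max_mset P) = 1} \<union> C" unfolding C_def by auto
  moreover have "finite C" "finite {P \<in> S1 (n-1). count P (Max_mset P) = 1}"
    unfolding C_def using finite_S1 by auto
  moreover have "{P \<in> S1 (n-1). count P (Max_mset P) = 1} \<inter> C = {}" unfolding C_def by auto
  ultimately have d1: "DE1 (n-1) = DE3 (n-1) + card C" unfolding DE3_S1 DE1_S1
    by (metis card_Un_disjoint)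
  show ?thesis using d3 d1 cA cB by simp
qed

end
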